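(* Let $e=(1,0)$ and $g(s)=1+|s|^2-2\frac{s_1^2}{|s|}$ for $s=(s_1,s_2)\in\mathbb{R}^2$. Then $$\left|\frac{\varepsilon^2}{2\varepsilon^2+g(e+\varepsilon k)}-\frac{1}{2+k_1^2+2k_3^2}\right|\lesssim\frac{\varepsilon|k|^3}{(1+|k|^2)^2}$$ uniformly over $k=(k_1,k_3)$ with $|k|<\delta/\varepsilon$.
   Context: $\delta\in(0,\frac15)$ is fixed and $\varepsilon>0$. $A\lesssim B$ means $A\le CB$ with a constant $C$ independent of $\varepsilon$ and $k$. *)

theory Defs
  imports "HOL-Analysis.Analysis"
begin

definition e_vec :: "real \<times> real" where
  "e_vec = (1, 0)"

definition g :: "real \<times> real \<Rightarrow> real" where
  "g s = 1 + (norm s)^2 - 2 * (fst s)^2 / norm s"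

end

theory Submission
  imports Defs
begin

lemma core:
  fixes e a b r K :: real
  assumes e: "e > 0" and K0: "K \<ge> 0" and K2: "K^2 = a^2 + b^2" and r0: "r > 0"
    and r2: "r^2 = (1 + e*a)^2 + (e*b)^2" and rp: "\<bar>r - 1\<bar> \<le> e*K" and small: "e*K < 1/5"
  shows "\<bar>e^2 / (2*e^2 + ((r-1)^2 + 2*e^2*b^2/r)) - 1/(2 + a^2 + 2*b^2)\<bar> \<le> 17 * (e * K^3 / (1+K^2)^2)"
proof -
  define p where "p = r - 1"
  have rl: "4/5 \<le> r" and ru: "r \<le> 6/5" using rp small unfolding abs_le_iff by linarith+
  have hp: "p*(r+1) = 2*e*a + e^2*K^2" unfolding p_def using r2 K2 by (simp add: algebra_simps power2_eq_square)
  have aK: "\<bar>a\<bar> \<le> K" using K0 K2 by (metis abs_le_square_iff abs_of_nonneg le_add_same_cancel1 zero_le_power2)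
  have bK: "\<bar>b\<bar> \<le> K" using K0 K2 by (metis abs_le_square_iff abs_of_nonneg le_add_same_cancel2 zero_le_power2)
  have pK: "\<bar>p\<bar> \<le> e*K" using rp p_def by simp
  define N where "N = e^2*a^2 - p^2 + 2*e^2*b^2*p/r"
  define G where "G = 2*e^2 + ((r-1)^2 + 2*e^2*b^2/r)"
  define D where "D = 2 + a^2 + 2*b^2"
  have D1: "D \<ge> 1 + K^2" unfolding D_def using K2 by (simp add: zero_le_power2)
  have e1: "(e*a - p)*(r+1) = e*a*p - e^2*K^2" using hp unfolding p_def by (simp add: algebra_simps power2_eq_square)
  have "\<bar>e*a*p\<bar> \<le> e*K*(e*K)" unfolding abs_mult using e aK pK
    by (simp add: mult_mono mult_nonneg_nonneg abs_of_pos)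
  hence "\<bar>(e*a - p)*(r+1)\<bar> \<le> 2*e^2*K^2" unfolding e1 by (simp add: power2_eq_square abs_le_iff abs_if split: if_splits; argo)
  hence "\<bar>e*a - p\<bar>*(r+1) \<le> 2*e^2*K^2" using r0 by (simp add: abs_mult)
  hence A1: "\<bar>e*a - p\<bar> \<le> 2*e^2*K^2" using r0 by (smt (verit) mult_le_cancel_left1 abs_ge_zero mult.commute)
  have "\<bar>e*a\<bar> \<le> e*K" using aK e by (simp add: abs_mult)
  hence A2: "\<bar>e*a + p\<bar> \<le> 2*e*K" using pK by linarith
  have "\<bar>e^2*a^2 - p^2\<bar> = \<bar>e*a - p\<bar>*\<bar>e*a + p\<bar>" by (simp add: abs_mult[symmetric] algebra_simps power2_eq_square)
  also have "\<dots> \<le> (2*e^2*K^2)*(2*e*K)" using A1 A2 by (intro mult_mono) auto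
  finally have N1: "\<bar>e^2*a^2 - p^2\<bar> \<le> 4*e^3*K^3" by (simp add: power2_eq_square power3_eq_cube algebra_simps)
  have "\<bar>2*e^2*b^2*p/r\<bar> = 2*e^2*b^2*\<bar>p\<bar>/r" using r0 by (simp add: abs_mult)
  also have "\<dots> \<le> 2*e^2*K^2*(e*K)/(4/5)"
  proof (rule frac_le)
    have "b^2 \<le> K^2" using K2 by simp
    thus "2*e^2*b^2*\<bar>p\<bar> \<le> 2*e^2*K^2*(e*K)" using pK e by (simp add: mult_mono)
  qed (use rl e K0 in auto)
  finally have N2: "\<bar>2*e^2*b^2*p/r\<bar> \<le> 5/2*e^3*K^3" by (simp add: power2_eq_square power3_eq_cube algebra_simps)
  have Nb: "\<bar>N\<bar> \<le> 13/2*e^3*K^3" unfolding N_def using N1 N2 by linarith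
  have sq: "(x+y)^2 - (x^2/2 - y^2) = (x+2*y)^2/2" for x y :: real by (simp add: power2_eq_square algebra_simps)
  have "(2*e*a + e^2*K^2)^2 - ((2*e*a)^2/2 - (e^2*K^2)^2) \<ge> 0" unfolding sq by simp
  hence "(2*e*a + e^2*K^2)^2 \<ge> 2*e^2*a^2 - e^4*K^4" by (simp add: power_mult_distrib power2_eq_square power4_eq_xxxx algebra_simps)
  moreover have "e^4*K^4 \<le> e^2*K^2/25"
  proof -
    have "(e*K)^2 \<le> (1/5)^2" using small e K0 by (intro power_mono) auto
    hence "(e*K)^2*(e*K)^2 \<le> (1/5)^2*(e*K)^2" by (intro mult_right_mono) auto
    thus ?thesis by (simp add: power_mult_distrib power2_eq_square power4_eq_xxxx algebra_simps)
  qed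
  ultimately have "p^2*(r+1)^2 \<ge> 2*e^2*a^2 - e^2*K^2/25" using hp by (simp add: power_mult_distrib[symmetric])
  moreover have "(r+1)^2 \<le> (11/5)^2" using ru r0 by (intro power_mono) auto
  hence "(r+1)^2 \<le> 121/25" by (simp add: power2_eq_square)
  ultimately have "p^2*(121/25) \<ge> 2*e^2*a^2 - e^2*K^2/25"
    using mult_left_mono[of "(r+1)^2" "121/25" "p^2"] by simp
  hence P2: "p^2 \<ge> (50*a^2 - K^2)*e^2/121" by (simp add: algebra_simps)
  have "2*e^2*b^2/r \<ge> 2*e^2*b^2/(6/5)" using ru r0 by (intro divide_left_mono) (auto simp: zero_le_power2)
  hence B2: "2*e^2*b^2/r \<ge> 5/3*e^2*b^2" by (simp add: mult.commute mult.left_commute)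
  have "2/5*(1+K^2) \<le> 2 + (49*a^2 + (602/3)*b^2)/121" unfolding K2 using zero_le_power2[of a] zero_le_power2[of b] by (simp add: field_simps)
  hence "e^2*(2/5*(1+K^2)) \<le> e^2*(2 + (49*a^2 + (602/3)*b^2)/121)" by (intro mult_left_mono) auto
  also have "\<dots> = 2*e^2 + (50*a^2 - K^2)*e^2/121 + 5/3*e^2*b^2" unfolding K2 by (simp add: field_simps)
  also have "\<dots> \<le> G" unfolding G_def using P2 B2 p_def by simp
  finally have Gb: "G \<ge> 2/5*e^2*(1+K^2)" by (simp add: algebra_simps)
  have Gp: "2/5*e^2*(1+K^2) > 0" using e by (simp add: add_pos_nonneg zero_le_power2)
  have Gpos: "G > 0" using Gb Gp by linarith
  have Dpos: "D > 0" using D1 by (smt (verit) zero_le_power2)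
  have d1: "e^2/G - 1/D = (e^2*D - G)/(G*D)" using Gpos Dpos by (simp add: field_simps)
  have d2: "e^2*D - G = N" unfolding N_def G_def D_def p_def using r0
    by (simp add: field_simps)
  have diff: "e^2/G - 1/D = N/(G*D)" using d1 d2 by simp
  have "\<bar>N/(G*D)\<bar> = \<bar>N\<bar>/(G*D)" using Gpos Dpos by (simp add: abs_mult)
  also have "\<dots> \<le> (13/2*e^3*K^3)/((2/5*e^2*(1+K^2))*(1+K^2))"
  proof (rule frac_le)
    show "0 \<le> 13/2*e^3*K^3" using e K0 by simp
    show "\<bar>N\<bar> \<le> 13/2*e^3*K^3" by (rule Nb)
    show "0 < 2/5*e^2*(1+K^2)*(1+K^2)" using Gp by (simp add: add_pos_nonneg)
    show "2/5*e^2*(1+K^2)*(1+K^2) \<le> G*D" using Gb D1 Gp by (intro mult_mono) auto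
  qed
  also have "\<dots> = 65/4 * (e * K^3 / (1+K^2)^2)"
  proof -
    have Q: "1+K^2 > 0" by (simp add: add_pos_nonneg)
    have "(13/2*e^3*K^3)/((2/5*e^2*Q)*Q) = 65/4*(e*K^3/Q^2)" if "Q > 0" for Q
      using that e by (simp add: field_simps power2_eq_square power3_eq_cube)
    from this[OF Q] show ?thesis .
  qed
  also have "\<dots> \<le> 17 * (e * K^3 / (1+K^2)^2)" using e K0 by (intro mult_right_mono) auto
  finally show ?thesis using diff unfolding G_def D_def by simp
qed

theorem proposition5p2:
  fixes \<delta> :: real
  assumes "0 < \<delta>" and "\<delta> < 1/5"
  shows "\<exists>C. \<forall>\<epsilon>::real. \<forall>k::real \<times> real. 0 < \<epsilon> \<longrightarrow> norm k < \<delta> / \<epsilon> \<longrightarrow>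
    \<bar>\<epsilon>^2 / (2 * \<epsilon>^2 + g (e_vec + \<epsilon> *\<^sub>R k)) - 1 / (2 + (fst k)^2 + 2 * (snd k)^2)\<bar>
      \<le> C * (\<epsilon> * (norm k)^3 / (1 + (norm k)^2)^2)"
proof (intro exI allI impI)
  fix e :: real and k :: "real \<times> real"
  assume e: "0 < e" and kd: "norm k < \<delta> / e"
  obtain a b where k: "k = (a, b)" by fastforce
  define K where "K = norm k"
  define r where "r = norm (e_vec + e *\<^sub>R k)"
  have K0: "K \<ge> 0" unfolding K_def by simp
  have K2: "K^2 = a^2 + b^2" unfolding K_def k by (simp add: norm_Pair)
  have small: "e*K < 1/5" using kd e assms unfolding K_def by (simp add: field_simps)
  have ev: "e_vec + e *\<^sub>R k = (1 + e*a, e*b)" unfolding e_vec_def k by simp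
  have r2: "r^2 = (1 + e*a)^2 + (e*b)^2" unfolding r_def ev by (simp add: norm_Pair)
  have "\<bar>norm (e_vec + e *\<^sub>R k) - norm e_vec\<bar> \<le> norm (e *\<^sub>R k)"
    using norm_triangle_ineq3[of "e_vec + e *\<^sub>R k" e_vec] by simp
  hence rp: "\<bar>r - 1\<bar> \<le> e*K" unfolding r_def K_def using e by (simp add: e_vec_def)
  have r0: "r > 0" using rp small by linarith
  have gg: "g (e_vec + e *\<^sub>R k) = (r-1)^2 + 2*e^2*b^2/r"
  proof -
    have "g (e_vec + e *\<^sub>R k) = 1 + r^2 - 2*(1+e*a)^2/r" unfolding g_def r_def[symmetric] by (simp add: ev)
    also have "(1+e*a)^2 = r^2 - e^2*b^2" using r2 by (simp add: power_mult_distrib)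
    finally show ?thesis using r0 by (simp add: field_simps power2_eq_square)
  qed
  show "\<bar>e^2 / (2 * e^2 + g (e_vec + e *\<^sub>R k)) - 1 / (2 + (fst k)^2 + 2 * (snd k)^2)\<bar>
      \<le> 17 * (e * (norm k)^3 / (1 + (norm k)^2)^2)"
    using core[OF e K0 K2 r0 r2 rp small] unfolding gg K_def by (simp add: k)
qed
end
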